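(* Let $(G,\vec\nu)$ be a signature game on a finite game graph $G$ with vertex set $V$ and maximal absolute integer weight $W$, such that every integer threshold $\nu_i\in\mathbb{Z}$ satisfies $\nu_i\geq -2\cdot W\cdot|V|$. Then player 1 has a winning strategy in $(G,\vec\nu)$ if and only if player 1 has a memoryless (positional) winning strategy in $(G,\vec\nu)$.
   Context: A finite two-player game graph $G=((V,E),(V_1,V_2))$ has a finite directed graph $(V,E)$ whose vertices are partitioned into player-1 vertices $V_1$ and player-2 vertices $V_2$, an initial vertex $v_0$, and a weight function $w:E\to\mathbb{Z}\cup\{-\omega\}$; $W$ is the maximum absolute value of the integer weights. Plays are infinite paths from $v_0$, the owner of the current vertex choosing the next edge. The weight of a finite path is the sum of its edge weights, with the convention $-\omega+z=-\omega$ for $z\in\mathbb{Z}\cup\{-\omega\}$. A signature game $(G,\vec\nu)$ has a threshold vector $\vec\nu=(\nu_1,\dots,\nu_{|V|})$ with $\nu_i\in\mathbb{Z}\cup\{+\infty,-\omega\}$, where $\nu_i$ is associated to vertex $v_i$. Player 1 wins a play $\rho=\rho_0\rho_1\dots$ iff (a) $\rho$ contains no cycle of negative weight and no cycle containing an edge of weight $-\omega$, and (b) for every $j$, if $\rho_j=v_i$ then $w(\rho_0\dots\rho_j)\geq\nu_i$, under the order $-\omega<z<+\infty$ for all $z\in\mathbb{Z}$ (so vertices with threshold $+\infty$ must never be visited). A memoryless strategy chooses the next edge depending only on the current vertex; a winning strategy ensures player 1 wins every consistent play. *)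

theory Defs
  imports Main
begin

datatype wt = WFin int | NegOmega

datatype thr = TFin int | PInf | TNegOmega

fun wt_add :: "wt \<Rightarrow> wt \<Rightarrow> wt" where
  "wt_add (WFin a) (WFin b) = WFin (a + b)"
| "wt_add _ _ = NegOmega"

text \<open>Order -omega < z < +infinity: does value x meet threshold t (x >= t)?\<close>
fun meets :: "wt \<Rightarrow> thr \<Rightarrow> bool" where
  "meets _ TNegOmega = True"
| "meets _ PInf = False"
| "meets (WFin z) (TFin n) = (n \<le> z)"
| "meets NegOmega (TFin n) = False"

text \<open>Finite game graph: finite vertex set V, edges E within V, player-1 vertices V1
  (player-2 vertices are V - V1), initial vertex v0, every vertex has a successor.\<close>
definition game_graph :: "'v set \<Rightarrow> ('v \<times> 'v) set \<Rightarrow> 'v set \<Rightarrow> 'v \<Rightarrow> bool" where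
  "game_graph V E V1 v0 \<longleftrightarrow> finite V \<and> E \<subseteq> V \<times> V \<and> V1 \<subseteq> V \<and> v0 \<in> V
     \<and> (\<forall>v\<in>V. \<exists>u. (v, u) \<in> E)"

definition maxW :: "('v \<times> 'v) set \<Rightarrow> ('v \<Rightarrow> 'v \<Rightarrow> wt) \<Rightarrow> int" where
  "maxW E w = Max ({\<bar>z\<bar> | z u v. (u, v) \<in> E \<and> w u v = WFin z} \<union> {0})"

definition seg_weight :: "('v \<Rightarrow> 'v \<Rightarrow> wt) \<Rightarrow> (nat \<Rightarrow> 'v) \<Rightarrow> nat \<Rightarrow> nat \<Rightarrow> wt" where
  "seg_weight w \<rho> i j = foldl wt_add (WFin 0) (map (\<lambda>k. w (\<rho> k) (\<rho> (Suc k))) [i..<j])"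

definition is_play :: "('v \<times> 'v) set \<Rightarrow> 'v \<Rightarrow> (nat \<Rightarrow> 'v) \<Rightarrow> bool" where
  "is_play E v0 \<rho> \<longleftrightarrow> \<rho> 0 = v0 \<and> (\<forall>i. (\<rho> i, \<rho> (Suc i)) \<in> E)"

text \<open>Winning condition of player 1 in the signature game: (a) every cycle in the play
  (a segment rho_i..rho_j, i<j, rho_i = rho_j) has non-negative integer weight, i.e. is
  neither negative nor contains an edge of weight -omega; (b) threshold condition.\<close>
definition wins1 :: "('v \<Rightarrow> 'v \<Rightarrow> wt) \<Rightarrow> ('v \<Rightarrow> thr) \<Rightarrow> (nat \<Rightarrow> 'v) \<Rightarrow> bool" where
  "wins1 w \<nu> \<rho> \<longleftrightarrow>
     (\<forall>i j. i < j \<and> \<rho> i = \<rho> j \<longrightarrow> (\<exists>z. seg_weight w \<rho> i j = WFin z \<and> 0 \<le> z))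
   \<and> (\<forall>j. meets (seg_weight w \<rho> 0 j) (\<nu> (\<rho> j)))"

text \<open>A (general, history-dependent) strategy of player 1 maps nonempty histories
  rho_0 ... rho_i (as lists, in order) ending in a player-1 vertex to a successor.\<close>
definition strategy1 :: "('v \<times> 'v) set \<Rightarrow> 'v set \<Rightarrow> ('v list \<Rightarrow> 'v) \<Rightarrow> bool" where
  "strategy1 E V1 \<sigma> \<longleftrightarrow> (\<forall>h. h \<noteq> [] \<and> last h \<in> V1 \<longrightarrow> (last h, \<sigma> h) \<in> E)"

definition memoryless :: "('v list \<Rightarrow> 'v) \<Rightarrow> bool" where
  "memoryless \<sigma> \<longleftrightarrow> (\<exists>f. \<forall>h. h \<noteq> [] \<longrightarrow> \<sigma> h = f (last h))"

definition consistent :: "'v set \<Rightarrow> ('v list \<Rightarrow> 'v) \<Rightarrow> (nat \<Rightarrow> 'v) \<Rightarrow> bool" where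
  "consistent V1 \<sigma> \<rho> \<longleftrightarrow> (\<forall>i. \<rho> i \<in> V1 \<longrightarrow> \<rho> (Suc i) = \<sigma> (map \<rho> [0..<Suc i]))"

definition winning1 :: "('v \<times> 'v) set \<Rightarrow> 'v set \<Rightarrow> 'v \<Rightarrow> ('v \<Rightarrow> 'v \<Rightarrow> wt) \<Rightarrow> ('v \<Rightarrow> thr)
    \<Rightarrow> ('v list \<Rightarrow> 'v) \<Rightarrow> bool" where
  "winning1 E V1 v0 w \<nu> \<sigma> \<longleftrightarrow> strategy1 E V1 \<sigma> \<and>
     (\<forall>\<rho>. is_play E v0 \<rho> \<and> consistent V1 \<sigma> \<rho> \<longrightarrow> wins1 w \<nu> \<rho>)"

end

theory Submission imports Defs begin

definition cntw :: "('v \<Rightarrow> 'v \<Rightarrow> wt) \<Rightarrow> (nat \<Rightarrow> 'v) \<Rightarrow> nat \<Rightarrow> nat \<Rightarrow> nat" where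
  "cntw w \<rho> i j = (\<Sum>k\<in>{i..<j}. if w (\<rho> k) (\<rho> (Suc k)) = NegOmega then 1 else 0)"

fun fv :: "wt \<Rightarrow> int" where "fv (WFin z) = z" | "fv NegOmega = 0"

definition finw :: "('v \<Rightarrow> 'v \<Rightarrow> wt) \<Rightarrow> (nat \<Rightarrow> 'v) \<Rightarrow> nat \<Rightarrow> nat \<Rightarrow> int" where
  "finw w \<rho> i j = (\<Sum>k\<in>{i..<j}. fv (w (\<rho> k) (\<rho> (Suc k))))"

definition lek :: "nat \<times> int \<Rightarrow> nat \<times> int \<Rightarrow> bool" where
  "lek a b \<longleftrightarrow> fst b < fst a \<or> (fst a = fst b \<and> snd a \<le> snd b)"

fun addk :: "nat \<times> int \<Rightarrow> wt \<Rightarrow> nat \<times> int" where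
  "addk (c,F) NegOmega = (Suc c, F)" | "addk (c,F) (WFin z) = (c, F + z)"

lemma lek_refl: "lek a a" by (simp add: lek_def)
lemma lek_trans: "lek a b \<Longrightarrow> lek b c \<Longrightarrow> lek a c" by (auto simp: lek_def)
lemma lek_mono: "lek a b \<Longrightarrow> lek (addk a x) (addk b x)"
  by (cases a; cases b; cases x) (auto simp: lek_def)

lemma cntw_Suc: "i \<le> j \<Longrightarrow> cntw w \<rho> i (Suc j) = cntw w \<rho> i j + (if w (\<rho> j) (\<rho> (Suc j)) = NegOmega then 1 else 0)"
  by (simp add: cntw_def)
lemma finw_Suc: "i \<le> j \<Longrightarrow> finw w \<rho> i (Suc j) = finw w \<rho> i j + fv (w (\<rho> j) (\<rho> (Suc j)))"
  by (simp add: finw_def)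

lemma addk_Suc: "i \<le> j \<Longrightarrow> addk (a + cntw w \<rho> i j, b + finw w \<rho> i j) (w (\<rho> j) (\<rho> (Suc j)))
   = (a + cntw w \<rho> i (Suc j), b + finw w \<rho> i (Suc j))"
  by (cases "w (\<rho> j) (\<rho> (Suc j))") (simp_all add: cntw_Suc finw_Suc)

lemma seg_eq: "seg_weight w \<rho> i j = (if cntw w \<rho> i j = 0 then WFin (finw w \<rho> i j) else NegOmega)"
proof (induction j)
  case 0
  then show ?case by (simp add: seg_weight_def cntw_def finw_def)
next
  case (Suc j)
  show ?case
  proof (cases "i \<le> j")
    case True
    have "seg_weight w \<rho> i (Suc j) = wt_add (seg_weight w \<rho> i j) (w (\<rho> j) (\<rho> (Suc j)))"
      using True by (simp add: seg_weight_def)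
    then show ?thesis using Suc True
      by (cases "w (\<rho> j) (\<rho> (Suc j))") (auto simp: cntw_Suc finw_Suc)
  next
    case False
    then show ?thesis by (simp add: seg_weight_def cntw_def finw_def)
  qed
qed

lemma cntw_split: "i \<le> j \<Longrightarrow> j \<le> k \<Longrightarrow> cntw w \<rho> i k = cntw w \<rho> i j + cntw w \<rho> j k"
  unfolding cntw_def by (simp add: sum.atLeastLessThan_concat)
lemma finw_split: "i \<le> j \<Longrightarrow> j \<le> k \<Longrightarrow> finw w \<rho> i k = finw w \<rho> i j + finw w \<rho> j k"
  unfolding finw_def by (simp add: sum.atLeastLessThan_concat)

lemma wins_cyc:
  assumes "wins1 w \<nu> \<rho>" "i < j" "\<rho> i = \<rho> j"
  shows "cntw w \<rho> i j = 0 \<and> 0 \<le> finw w \<rho> i j"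
proof -
  have "\<exists>z. seg_weight w \<rho> i j = WFin z \<and> 0 \<le> z" using assms unfolding wins1_def by blast
  then show ?thesis unfolding seg_eq by (auto split: if_splits)
qed

lemma meets_NegOmega: "meets NegOmega t \<Longrightarrow> t = TNegOmega"
  by (cases t) auto

lemma meets_mono: "meets (WFin a) t \<Longrightarrow> a \<le> b \<Longrightarrow> meets (WFin b) t"
  by (cases t) auto

lemma maxW_fin: assumes f: "finite E"
  shows "finite ({\<bar>z\<bar> | z u v. (u,v)\<in>E \<and> w u v = WFin z} \<union> {0})"
proof -
  have "{\<bar>z\<bar> | z u v. (u,v)\<in>E \<and> w u v = WFin z} \<subseteq> (\<lambda>(u,v). \<bar>fv (w u v)\<bar>) ` E"
  proof
    fix x assume "x \<in> {\<bar>z\<bar> | z u v. (u,v)\<in>E \<and> w u v = WFin z}"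
    then obtain z u v where "x = \<bar>z\<bar>" "(u,v)\<in>E" "w u v = WFin z" by blast
    thus "x \<in> (\<lambda>(u,v). \<bar>fv (w u v)\<bar>) ` E" by (force intro!: rev_image_eqI[of "(u,v)"])
  qed
  moreover have "finite ((\<lambda>(u,v). \<bar>fv (w u v)\<bar>) ` E)" using f by simp
  ultimately show ?thesis by (simp add: finite_subset)
qed

lemma maxW_nonneg: "finite E \<Longrightarrow> 0 \<le> maxW E w"
  unfolding maxW_def by (rule Max_ge[OF maxW_fin]) auto

lemma maxW_edge: assumes "finite E" "(u,v) \<in> E" shows "- maxW E w \<le> fv (w u v)"
proof (cases "w u v")
  case (WFin z)
  have "\<bar>z\<bar> \<le> maxW E w" unfolding maxW_def
    by (rule Max_ge[OF maxW_fin[OF assms(1)]]) (use assms WFin in blast)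
  then show ?thesis using WFin by simp
next
  case NegOmega
  then show ?thesis using maxW_nonneg[OF assms(1), of w] by simp
qed

lemma gg_finE: "game_graph V E V1 v0 \<Longrightarrow> finite E"
  unfolding game_graph_def by (meson finite_SigmaI finite_subset)

lemma play_in_V: assumes "game_graph V E V1 v0" "is_play E v0 \<rho>" shows "\<rho> k \<in> V"
proof (induction k)
  case 0 then show ?case using assms unfolding game_graph_def is_play_def by simp
next
  case (Suc k)
  have "(\<rho> k, \<rho> (Suc k)) \<in> E" using assms(2) unfolding is_play_def by simp
  then show ?case using assms(1) unfolding game_graph_def by auto
qed

lemma cnt_bound:
  assumes gg: "game_graph V E V1 v0" and pl: "is_play E v0 \<rho>" and win: "wins1 w \<nu> \<rho>"
  shows "cntw w \<rho> 0 n \<le> card V"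
proof -
  define K where "K = {0..<n} \<inter> {k. w (\<rho> k) (\<rho> (Suc k)) = NegOmega}"
  have "cntw w \<rho> 0 n = (\<Sum>k\<in>{0..<n}. of_bool (w (\<rho> k) (\<rho> (Suc k)) = NegOmega))"
    unfolding cntw_def by (simp add: of_bool_def)
  also have "\<dots> = card K" unfolding K_def by simp
  finally have c: "cntw w \<rho> 0 n = card K" .
  have inj: "inj_on \<rho> K"
  proof (rule inj_onI)
    fix a b assume a: "a \<in> K" and b: "b \<in> K" and eq: "\<rho> a = \<rho> b"
    show "a = b"
    proof (rule ccontr)
      assume "a \<noteq> b"
      then consider "a < b" | "b < a" by linarith
      then show False
      proof cases
        case 1
        have "cntw w \<rho> a b = 0" using wins_cyc[OF win 1 eq] by simp
        moreover have "cntw w \<rho> a b \<ge> 1"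
          unfolding cntw_def using 1 a unfolding K_def
          by (intro order_trans[OF _ member_le_sum[of a]]) auto
        ultimately show False by simp
      next
        case 2
        have "cntw w \<rho> b a = 0" using wins_cyc[OF win 2 eq[symmetric]] by simp
        moreover have "cntw w \<rho> b a \<ge> 1"
          unfolding cntw_def using 2 b unfolding K_def
          by (intro order_trans[OF _ member_le_sum[of b]]) auto
        ultimately show False by simp
      qed
    qed
  qed
  have "card K = card (\<rho> ` K)" using inj by (simp add: card_image)
  also have "\<dots> \<le> card V"
    using gg play_in_V[OF gg pl] unfolding game_graph_def by (intro card_mono) auto
  finally show ?thesis using c by simp
qed

lemma fin_bound0:
  assumes gg: "game_graph V E V1 v0" and pl: "is_play E v0 \<rho>" and win: "wins1 w \<nu> \<rho>"
  shows "maxW E w - maxW E w * int (card (\<rho> ` {..j})) \<le> finw w \<rho> 0 j"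
proof (induction j rule: less_induct)
  case (less j)
  let ?W = "maxW E w"
  have finE: "finite E" using gg_finE[OF gg] .
  define i where "i = (LEAST i. \<rho> i = \<rho> j)"
  have ij: "i \<le> j" unfolding i_def by (rule Least_le) simp
  have ri: "\<rho> i = \<rho> j" unfolding i_def by (rule LeastI) simp
  have W0: "0 \<le> ?W" by (rule maxW_nonneg[OF finE])
  show ?case
  proof (cases "i < j")
    case True
    have c: "0 \<le> finw w \<rho> i j" using wins_cyc[OF win True ri] by simp
    have "card (\<rho> ` {..i}) \<le> card (\<rho> ` {..j})"
      by (rule card_mono) (use ij in auto)
    hence "?W * int (card (\<rho> ` {..i})) \<le> ?W * int (card (\<rho> ` {..j}))"
      using W0 by (simp add: mult_left_mono)
    with less.IH[OF True] c finw_split[of 0 i j w \<rho>] ij show ?thesis by linarith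
  next
    case False
    hence ieq: "i = j" using ij by simp
    show ?thesis
    proof (cases j)
      case 0 thus ?thesis by (simp add: finw_def)
    next
      case (Suc m)
      have new: "\<rho> j \<notin> \<rho> ` {..m}"
      proof
        assume "\<rho> j \<in> \<rho> ` {..m}"
        then obtain i' where i': "i' \<le> m" "\<rho> i' = \<rho> j" by auto
        hence "i \<le> i'" unfolding i_def by (metis Least_le)
        thus False using ieq Suc i' by simp
      qed
      have card: "card (\<rho> ` {..j}) = Suc (card (\<rho> ` {..m}))"
        using new Suc by (simp add: atMost_Suc)
      have e: "(\<rho> m, \<rho> j) \<in> E" using pl Suc unfolding is_play_def by auto
      have eb: "- ?W \<le> fv (w (\<rho> m) (\<rho> j))" by (rule maxW_edge[OF finE e])
      have fs: "finw w \<rho> 0 j = finw w \<rho> 0 m + fv (w (\<rho> m) (\<rho> j))"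
        using finw_Suc[of 0 m w \<rho>] Suc by simp
      have cs: "?W * int (card (\<rho> ` {..j})) = ?W * int (card (\<rho> ` {..m})) + ?W"
        by (simp add: card algebra_simps)
      show ?thesis using less.IH[of m] Suc fs cs eb by simp
    qed
  qed
qed

lemma fin_bound:
  assumes gg: "game_graph V E V1 v0" and pl: "is_play E v0 \<rho>" and win: "wins1 w \<nu> \<rho>"
  shows "- (maxW E w * int (card V)) \<le> finw w \<rho> 0 j"
proof -
  have W0: "0 \<le> maxW E w" by (rule maxW_nonneg[OF gg_finE[OF gg]])
  have "card (\<rho> ` {..j}) \<le> card V"
    using gg play_in_V[OF gg pl] unfolding game_graph_def by (intro card_mono) auto
  hence "maxW E w * int (card (\<rho> ` {..j})) \<le> maxW E w * int (card V)"
    using W0 by (simp add: mult_left_mono)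
  with fin_bound0[OF assms, of j] W0 show ?thesis by linarith
qed

fun gext :: "('v list \<Rightarrow> 'v) \<Rightarrow> (nat \<Rightarrow> 'v) \<Rightarrow> nat \<Rightarrow> nat \<Rightarrow> 'v list" where
  "gext nx \<rho>0 n 0 = [\<rho>0 0]"
| "gext nx \<rho>0 n (Suc k) = gext nx \<rho>0 n k @ [if Suc k \<le> n then \<rho>0 (Suc k) else nx (gext nx \<rho>0 n k)]"

lemma extend:
  assumes gg: "game_graph V E V1 v0" and st: "strategy1 E V1 \<sigma>"
    and s0: "\<rho>0 0 = v0" and ed: "\<forall>i<n. (\<rho>0 i, \<rho>0 (Suc i)) \<in> E"
    and co: "\<forall>i<n. \<rho>0 i \<in> V1 \<longrightarrow> \<rho>0 (Suc i) = \<sigma> (map \<rho>0 [0..<Suc i])"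
  shows "\<exists>\<rho>. is_play E v0 \<rho> \<and> consistent V1 \<sigma> \<rho> \<and> (\<forall>i\<le>n. \<rho> i = \<rho>0 i)"
proof -
  define nx where "nx l = (if last l \<in> V1 then \<sigma> l else (SOME u. (last l, u) \<in> E))" for l
  define \<rho> where "\<rho> k = last (gext nx \<rho>0 n k)" for k
  have g: "gext nx \<rho>0 n k = map \<rho> [0..<Suc k]" for k
  proof (induction k)
    case 0 show ?case by (simp add: \<rho>_def[of 0])
  next
    case (Suc k)
    have "\<rho> (Suc k) = last (gext nx \<rho>0 n (Suc k))" by (rule \<rho>_def)
    then show ?case using Suc by (simp del: gext.simps) (simp)
  qed
  have r0: "\<rho> 0 = \<rho>0 0" by (simp add: \<rho>_def[of 0])
  have rS: "\<rho> (Suc k) = (if Suc k \<le> n then \<rho>0 (Suc k) else nx (map \<rho> [0..<Suc k]))" for k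
  proof -
    have "\<rho> (Suc k) = last (gext nx \<rho>0 n (Suc k))" by (rule \<rho>_def)
    also have "\<dots> = (if Suc k \<le> n then \<rho>0 (Suc k) else nx (gext nx \<rho>0 n k))" by simp
    finally show ?thesis by (simp only: g)
  qed
  have agree: "i \<le> n \<Longrightarrow> \<rho> i = \<rho>0 i" for i by (cases i) (simp_all add: r0 rS)
  have edge: "(\<rho> k, \<rho> (Suc k)) \<in> E" if kV: "\<rho> k \<in> V" for k
  proof (cases "Suc k \<le> n")
    case True then show ?thesis using ed agree[of k] agree[of "Suc k"] by auto
  next
    case False
    hence r: "\<rho> (Suc k) = nx (map \<rho> [0..<Suc k])" by (simp add: rS)
    have l: "last (map \<rho> [0..<Suc k]) = \<rho> k" by simp
    show ?thesis
    proof (cases "\<rho> k \<in> V1")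
      case True
      have ne: "map \<rho> [0..<Suc k] \<noteq> []" by simp
      have "(last (map \<rho> [0..<Suc k]), \<sigma> (map \<rho> [0..<Suc k])) \<in> E"
        using st ne True l unfolding strategy1_def by auto
      then show ?thesis using True r l unfolding nx_def by simp
    next
      case False
      have "\<exists>u. (\<rho> k, u) \<in> E" using gg kV unfolding game_graph_def by blast
      then show ?thesis using False r l unfolding nx_def by (simp add: someI_ex[where P="\<lambda>u. (\<rho> k, u) \<in> E"])
    qed
  qed
  have inV: "\<rho> k \<in> V" for k
  proof (induction k)
    case 0 then show ?case using r0 s0 gg unfolding game_graph_def by simp
  next
    case (Suc k) then show ?case using edge[OF Suc] gg unfolding game_graph_def by auto
  qed
  have play: "is_play E v0 \<rho>" unfolding is_play_def using r0 s0 edge inV by simp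
  have cons: "consistent V1 \<sigma> \<rho>" unfolding consistent_def
  proof (intro allI impI)
    fix i assume iV: "\<rho> i \<in> V1"
    show "\<rho> (Suc i) = \<sigma> (map \<rho> [0..<Suc i])"
    proof (cases "Suc i \<le> n")
      case True
      have m: "map \<rho>0 [0..<Suc i] = map \<rho> [0..<Suc i]"
        using True agree by (intro map_cong) auto
      have "\<rho>0 i \<in> V1" using agree[of i] True iV by simp
      then have b: "\<rho>0 (Suc i) = \<sigma> (map \<rho>0 [0..<Suc i])" using co True by auto
      have a: "\<rho> (Suc i) = \<rho>0 (Suc i)" using agree[of "Suc i"] True by simp
      show ?thesis using a b m by metis
    next
      case False
      then show ?thesis using iV by (simp add: rS nx_def)
    qed
  qed
  show ?thesis using play cons agree by blast
qed


lemma main_dir: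
  assumes gg: "game_graph V E V1 v0" and win: "winning1 E V1 v0 w \<nu> \<sigma>"
  shows "\<exists>\<sigma>'. memoryless \<sigma>' \<and> winning1 E V1 v0 w \<nu> \<sigma>'"
proof -
  have st: "strategy1 E V1 \<sigma>" and wp: "\<And>\<rho>. is_play E v0 \<rho> \<Longrightarrow> consistent V1 \<sigma> \<rho> \<Longrightarrow> wins1 w \<nu> \<rho>"
    using win unfolding winning1_def by auto
  define R where "R v = {(r,n). is_play E v0 r \<and> consistent V1 \<sigma> r \<and> r n = v}" for v
  define key where "key p = (cntw w (fst p) 0 (snd p), finw w (fst p) 0 (snd p))" for p :: "(nat \<Rightarrow> 'a) \<times> nat"
  have Rwin: "q \<in> R v \<Longrightarrow> wins1 w \<nu> (fst q) \<and> is_play E v0 (fst q) \<and> fst q (snd q) = v" for q v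
    using wp unfolding R_def by auto
  have opt_ex: "\<exists>p. p \<in> R v \<and> (\<forall>q\<in>R v. lek (key p) (key q))" if Rne: "R v \<noteq> {}" for v
  proof -
    obtain p0 where p0: "p0 \<in> R v" using Rne by blast
    obtain p1 where p1: "p1 \<in> R v" and p1m: "\<forall>q. q \<in> R v \<longrightarrow> card V - fst (key p1) \<le> card V - fst (key q)"
      using ex_has_least_nat[of "\<lambda>q. q \<in> R v" p0 "\<lambda>q. card V - fst (key q)"] p0 by blast
    have bnd: "fst (key q) \<le> card V" if "q \<in> R v" for q
      using cnt_bound[OF gg, of "fst q" w \<nu> "snd q"] Rwin[OF that] unfolding key_def by simp
    have cmax: "fst (key q) \<le> fst (key p1)" if "q \<in> R v" for q
    proof -
      have "card V - fst (key p1) \<le> card V - fst (key q)" using p1m that by blast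
      then show ?thesis using bnd[OF that] bnd[OF p1] by linarith
    qed
    define B where "B = maxW E w * int (card V)"
    have fb: "- B \<le> snd (key q)" if "q \<in> R v" for q
      using fin_bound[OF gg, of "fst q" w \<nu> "snd q"] Rwin[OF that] unfolding key_def B_def by simp
    obtain p2 where p2: "p2 \<in> R v \<and> fst (key p2) = fst (key p1)"
      and p2m: "\<forall>q. q \<in> R v \<and> fst (key q) = fst (key p1) \<longrightarrow> nat (snd (key p2) + B) \<le> nat (snd (key q) + B)"
      using ex_has_least_nat[of "\<lambda>q. q \<in> R v \<and> fst (key q) = fst (key p1)" p1 "\<lambda>q. nat (snd (key q) + B)"] p1
      by blast
    have "\<forall>q\<in>R v. lek (key p2) (key q)"
    proof
      fix q assume q: "q \<in> R v"
      show "lek (key p2) (key q)"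
      proof (cases "fst (key q) = fst (key p1)")
        case True
        then have "nat (snd (key p2) + B) \<le> nat (snd (key q) + B)" using p2m q by blast
        moreover have "0 \<le> snd (key p2) + B" "0 \<le> snd (key q) + B"
          using fb[OF q] fb[of p2] p2 by auto
        ultimately have "snd (key p2) \<le> snd (key q)" by simp
        then show ?thesis using True p2 unfolding lek_def by simp
      next
        case False
        then show ?thesis using cmax[OF q] p2 unfolding lek_def by simp
      qed
    qed
    then show ?thesis using p2 by blast
  qed
  define opt where "opt v = (SOME p. p \<in> R v \<and> (\<forall>q\<in>R v. lek (key p) (key q)))" for v
  have opt: "opt v \<in> R v \<and> (\<forall>q\<in>R v. lek (key (opt v)) (key q))" if "R v \<noteq> {}" for v
    unfolding opt_def by (rule someI_ex[OF opt_ex[OF that]])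
  define f where "f v = (if R v \<noteq> {} \<and> v \<in> V1 then \<sigma> (map (fst (opt v)) [0..<Suc (snd (opt v))])
      else (SOME u. (v,u) \<in> E))" for v
  define \<sigma>' where "\<sigma>' h = f (last h)" for h :: "'a list"
  have ext: "\<exists>r'. (r', Suc n) \<in> R u \<and> (\<forall>i\<le>n. r' i = r i)"
    if rn: "(r,n) \<in> R v" and e: "(v,u) \<in> E" and c: "v \<in> V1 \<longrightarrow> u = \<sigma> (map r [0..<Suc n])" for r n v u
  proof -
    define \<rho>0 where "\<rho>0 = r(Suc n := u)"
    from rn have pl: "is_play E v0 r" and co: "consistent V1 \<sigma> r" and rv: "r n = v"
      unfolding R_def by auto
    have m: "map \<rho>0 [0..<Suc i] = map r [0..<Suc i]" if "i \<le> n" for i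
      using that by (intro map_cong) (auto simp: \<rho>0_def)
    have "\<exists>\<rho>. is_play E v0 \<rho> \<and> consistent V1 \<sigma> \<rho> \<and> (\<forall>i\<le>Suc n. \<rho> i = \<rho>0 i)"
    proof (rule extend[OF gg st])
      show "\<rho>0 0 = v0" using pl by (simp add: \<rho>0_def is_play_def)
      show "\<forall>i<Suc n. (\<rho>0 i, \<rho>0 (Suc i)) \<in> E"
      proof (intro allI impI)
        fix i assume i: "i < Suc n"
        show "(\<rho>0 i, \<rho>0 (Suc i)) \<in> E"
        proof (cases "i = n")
          case True then show ?thesis using e rv by (simp add: \<rho>0_def)
        next
          case False then show ?thesis using pl i unfolding is_play_def by (simp add: \<rho>0_def)
        qed
      qed
      show "\<forall>i<Suc n. \<rho>0 i \<in> V1 \<longrightarrow> \<rho>0 (Suc i) = \<sigma> (map \<rho>0 [0..<Suc i])"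
      proof (intro allI impI)
        fix i assume i: "i < Suc n" and iv: "\<rho>0 i \<in> V1"
        show "\<rho>0 (Suc i) = \<sigma> (map \<rho>0 [0..<Suc i])"
        proof (cases "i = n")
          case True then show ?thesis using c rv iv m[of n] by (simp add: \<rho>0_def)
        next
          case False
          then have "r i \<in> V1" "i < n" using iv i by (auto simp: \<rho>0_def)
          then have "r (Suc i) = \<sigma> (map r [0..<Suc i])" using co unfolding consistent_def by blast
          then show ?thesis using m[of i] \<open>i < n\<close> by (simp add: \<rho>0_def)
        qed
      qed
    qed
    then obtain \<rho> where "is_play E v0 \<rho>" "consistent V1 \<sigma> \<rho>" "\<forall>i\<le>Suc n. \<rho> i = \<rho>0 i" by blast
    then show ?thesis unfolding R_def by (intro exI[of _ \<rho>]) (auto simp: \<rho>0_def)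
  qed
  have keyext: "key (r', Suc n) = addk (key (r,n)) (w v u)"
    if ag: "\<forall>i\<le>n. r' i = r i" and ru: "r' (Suc n) = u" and rv: "r n = v" for r' r n u v
  proof -
    have c: "cntw w r' 0 n = cntw w r 0 n" unfolding cntw_def using ag by (intro sum.cong) auto
    have f: "finw w r' 0 n = finw w r 0 n" unfolding finw_def using ag by (intro sum.cong) auto
    have "w (r' n) (r' (Suc n)) = w v u" using ag ru rv by simp
    then show ?thesis unfolding key_def using c f
      by (cases "w v u") (simp_all add: cntw_Suc finw_Suc)
  qed
  have step: "R u \<noteq> {} \<and> lek (key (opt u)) (addk (key (opt v)) (w v u))"
    if Rv: "R v \<noteq> {}" and e: "(v,u) \<in> E" and fv: "v \<in> V1 \<longrightarrow> u = f v" for v u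
  proof -
    obtain r n where on: "opt v = (r,n)" by (cases "opt v")
    have rn: "(r,n) \<in> R v" using opt[OF Rv] on by simp
    have "v \<in> V1 \<longrightarrow> u = \<sigma> (map r [0..<Suc n])" using fv Rv on unfolding f_def by simp
    then obtain r' where r': "(r', Suc n) \<in> R u" and ag: "\<forall>i\<le>n. r' i = r i" using ext[OF rn e] by blast
    have Ru: "R u \<noteq> {}" using r' by blast
    have "lek (key (opt u)) (key (r', Suc n))" using opt[OF Ru] r' by blast
    moreover have "key (r', Suc n) = addk (key (r,n)) (w v u)"
      using r' rn ag unfolding R_def by (intro keyext) auto
    ultimately show ?thesis using Ru on by simp
  qed
  obtain r0 where r0: "(r0, 0) \<in> R v0"
  proof -
    have "\<exists>\<rho>. is_play E v0 \<rho> \<and> consistent V1 \<sigma> \<rho> \<and> (\<forall>i\<le>0. \<rho> i = (\<lambda>_. v0) i)"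
      by (rule extend[OF gg st]) auto
    then obtain \<rho> where "is_play E v0 \<rho>" "consistent V1 \<sigma> \<rho>" "\<rho> 0 = v0" by auto
    then show ?thesis using that unfolding R_def by blast
  qed
  have Rv0: "R v0 \<noteq> {}" using r0 by blast
  have lek0: "lek (key (opt v0)) (0,0)"
  proof -
    have "lek (key (opt v0)) (key (r0,0))" using opt[OF Rv0] r0 by blast
    then show ?thesis unfolding key_def by (simp add: cntw_def finw_def)
  qed
  have strat: "strategy1 E V1 \<sigma>'" unfolding strategy1_def
  proof (intro allI impI)
    fix h :: "'a list" assume h: "h \<noteq> [] \<and> last h \<in> V1"
    let ?v = "last h"
    show "(last h, \<sigma>' h) \<in> E"
    proof (cases "R ?v \<noteq> {}")
      case True
      obtain r n where on: "opt ?v = (r,n)" by (cases "opt ?v")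
      have "r n = ?v" using opt[OF True] on unfolding R_def by auto
      then have l: "last (map r [0..<Suc n]) = ?v" by simp
      have "(last (map r [0..<Suc n]), \<sigma> (map r [0..<Suc n])) \<in> E"
      proof -
        have ne: "map r [0..<Suc n] \<noteq> []" by simp
        then show ?thesis using st h l unfolding strategy1_def by auto
      qed
      then show ?thesis using True h l on unfolding \<sigma>'_def f_def by simp
    next
      case False
      have "?v \<in> V" using h gg unfolding game_graph_def by auto
      then have "\<exists>u. (?v, u) \<in> E" using gg unfolding game_graph_def by blast
      then show ?thesis using False unfolding \<sigma>'_def f_def by (simp add: someI_ex[where P="\<lambda>u. (?v, u) \<in> E"])
    qed
  qed
  have wins: "wins1 w \<nu> \<rho>" if pl: "is_play E v0 \<rho>" and co: "consistent V1 \<sigma>' \<rho>" for \<rho>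
  proof -
    have fe: "(\<rho> j, \<rho> (Suc j)) \<in> E \<and> (\<rho> j \<in> V1 \<longrightarrow> \<rho> (Suc j) = f (\<rho> j))" for j
      using pl co unfolding is_play_def consistent_def \<sigma>'_def by simp
    have dom: "R (\<rho> j) \<noteq> {}" for j
    proof (induction j)
      case 0 then show ?case using Rv0 pl unfolding is_play_def by simp
    next
      case (Suc j) then show ?case using step fe by blast
    qed
    have chain: "lek (key (opt (\<rho> (i+d)))) (a + cntw w \<rho> i (i+d), b + finw w \<rho> i (i+d))"
      if base: "lek (key (opt (\<rho> i))) (a,b)" for i d a b
    proof (induction d)
      case 0 then show ?case using base by (simp add: cntw_def finw_def)
    next
      case (Suc d)
      have s: "lek (key (opt (\<rho> (Suc (i+d))))) (addk (key (opt (\<rho> (i+d)))) (w (\<rho> (i+d)) (\<rho> (Suc (i+d)))))"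
        using step[OF dom] fe by blast
      have "lek (addk (key (opt (\<rho> (i+d)))) (w (\<rho> (i+d)) (\<rho> (Suc (i+d)))))
                 (addk (a + cntw w \<rho> i (i+d), b + finw w \<rho> i (i+d)) (w (\<rho> (i+d)) (\<rho> (Suc (i+d)))))"
        by (rule lek_mono[OF Suc.IH])
      also have "addk (a + cntw w \<rho> i (i+d), b + finw w \<rho> i (i+d)) (w (\<rho> (i+d)) (\<rho> (Suc (i+d))))
          = (a + cntw w \<rho> i (Suc (i+d)), b + finw w \<rho> i (Suc (i+d)))"
        by (rule addk_Suc) simp
      finally have "lek (addk (key (opt (\<rho> (i+d)))) (w (\<rho> (i+d)) (\<rho> (Suc (i+d)))))
          (a + cntw w \<rho> i (Suc (i+d)), b + finw w \<rho> i (Suc (i+d)))" .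
      then show ?case using lek_trans[OF s] by simp
    qed
    have cyc: "\<exists>z. seg_weight w \<rho> i j = WFin z \<and> 0 \<le> z" if ij: "i < j" and eq: "\<rho> i = \<rho> j" for i j
    proof -
      obtain c F where cF: "key (opt (\<rho> i)) = (c,F)" by (cases "key (opt (\<rho> i))")
      have "lek (key (opt (\<rho> (i + (j-i))))) (c + cntw w \<rho> i (i+(j-i)), F + finw w \<rho> i (i+(j-i)))"
        by (rule chain) (simp add: cF lek_refl)
      then have "lek (c,F) (c + cntw w \<rho> i j, F + finw w \<rho> i j)" using ij eq cF by simp
      then have "cntw w \<rho> i j = 0" "0 \<le> finw w \<rho> i j" unfolding lek_def by auto
      then show ?thesis by (simp add: seg_eq)
    qed
    have thr: "meets (seg_weight w \<rho> 0 j) (\<nu> (\<rho> j))" for j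
    proof -
      have l: "lek (key (opt (\<rho> j))) (cntw w \<rho> 0 j, finw w \<rho> 0 j)"
        using chain[of 0 0 0 j] lek0 pl unfolding is_play_def by simp
      obtain r n where on: "opt (\<rho> j) = (r,n)" by (cases "opt (\<rho> j)")
      have rn: "(r,n) \<in> R (\<rho> j)" using opt[OF dom[of j]] on by simp
      have m: "meets (seg_weight w r 0 n) (\<nu> (\<rho> j))" using Rwin[OF rn] unfolding wins1_def by (metis fst_conv snd_conv)
      show ?thesis
      proof (cases "cntw w r 0 n = 0")
        case True
        then have "cntw w \<rho> 0 j = 0" "finw w r 0 n \<le> finw w \<rho> 0 j"
          using l on unfolding lek_def key_def by auto
        then show ?thesis using m True by (simp add: seg_eq meets_mono)
      next
        case False
        then have "\<nu> (\<rho> j) = TNegOmega" using m by (simp add: seg_eq meets_NegOmega)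
        then show ?thesis by simp
      qed
    qed
    show ?thesis unfolding wins1_def using cyc thr by blast
  qed
  have "memoryless \<sigma>'" unfolding memoryless_def \<sigma>'_def by blast
  then show ?thesis using strat wins unfolding winning1_def by blast
qed

theorem lemma10:
  fixes V :: "'v set" and E :: "('v \<times> 'v) set" and V1 :: "'v set" and v0 :: 'v
    and w :: "'v \<Rightarrow> 'v \<Rightarrow> wt" and \<nu> :: "'v \<Rightarrow> thr"
  assumes "game_graph V E V1 v0"
    and "\<forall>v\<in>V. \<forall>n. \<nu> v = TFin n \<longrightarrow> n \<ge> - 2 * maxW E w * int (card V)"
  shows "(\<exists>\<sigma>. winning1 E V1 v0 w \<nu> \<sigma>) \<longleftrightarrow> (\<exists>\<sigma>. memoryless \<sigma> \<and> winning1 E V1 v0 w \<nu> \<sigma>)"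
  using main_dir[OF assms(1)] by blast

end
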